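(* Let $M_m$ be a rotationally symmetric plane and $q\neq o$. If the geodesic $\gamma_q$ is escaping, then $m(r)>m(r_q)$ for all $r>r_q$, and $m'(r_q)>0$.
   Context: For a smooth function $m\colon[0,\infty)\to[0,\infty)$ with $m(0)=0$, $m'(0)=1$, $m>0$ on $(0,\infty)$ and smooth odd extension, $M_m$ is $\mathbb R^2$ with metric $dr^2+m(r)^2d\theta^2$ (polar coordinates $(r,\theta)$ about origin $o$). For $q\ne o$, $r_q$ is its $r$-coordinate and $\gamma_q\colon[0,\infty)\to M_m$ is the unit speed geodesic starting at $q$ in direction $\partial_\theta$. A geodesic is escaping if its image is unbounded. *)

theory Defs
  imports "HOL-Analysis.Analysis"
begin

definition smooth_fun :: "(real \<Rightarrow> real) \<Rightarrow> bool" where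
  "smooth_fun f \<longleftrightarrow> (\<forall>n x. ((deriv ^^ n) f) differentiable (at x))"

text \<open>Admissible warping function m, given by its (smooth) odd extension to the real line.\<close>
definition rot_sym_profile :: "(real \<Rightarrow> real) \<Rightarrow> bool" where
  "rot_sym_profile m \<longleftrightarrow> smooth_fun m \<and> m 0 = 0 \<and> deriv m 0 = 1 \<and>
     (\<forall>r>0. m r > 0) \<and> (\<forall>r. m (- r) = - m r)"

text \<open>Geodesic of the metric dr^2 + m(r)^2 dtheta^2 written in polar coordinates
  (r, theta) with velocities (rho, omega), on the time interval [0, infinity),
  staying away from the origin o (where polar coordinates are valid).\<close>
definition polar_geodesic ::
  "(real \<Rightarrow> real) \<Rightarrow> (real \<Rightarrow> real) \<Rightarrow> (real \<Rightarrow> real) \<Rightarrow> (real \<Rightarrow> real) \<Rightarrow> (real \<Rightarrow> real) \<Rightarrow> bool" where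
  "polar_geodesic m r \<theta> \<rho> \<omega> \<longleftrightarrow>
     (\<forall>t\<ge>0. r t > 0 \<and>
        (r has_real_derivative \<rho> t) (at t within {0..}) \<and>
        (\<theta> has_real_derivative \<omega> t) (at t within {0..}) \<and>
        (\<rho> has_real_derivative (m (r t) * deriv m (r t) * (\<omega> t)\<^sup>2)) (at t within {0..}) \<and>
        (\<omega> has_real_derivative (- 2 * deriv m (r t) / m (r t) * \<rho> t * \<omega> t)) (at t within {0..}))"

text \<open>gamma_q for q with polar coordinates (rq, thq), rq > 0: the unit speed geodesic
  starting at q in direction d/dtheta (whose unit vector is (1/m(rq)) d/dtheta).\<close>
definition is_gamma_q ::
  "(real \<Rightarrow> real) \<Rightarrow> real \<Rightarrow> real \<Rightarrow> (real \<Rightarrow> real) \<Rightarrow> (real \<Rightarrow> real) \<Rightarrow> (real \<Rightarrow> real) \<Rightarrow> (real \<Rightarrow> real) \<Rightarrow> bool" where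
  "is_gamma_q m rq thq r \<theta> \<rho> \<omega> \<longleftrightarrow>
     polar_geodesic m r \<theta> \<rho> \<omega> \<and> r 0 = rq \<and> \<theta> 0 = thq \<and> \<rho> 0 = 0 \<and> \<omega> 0 = 1 / m rq"

text \<open>Escaping: the image is unbounded, i.e. the distance r to o is unbounded.\<close>
definition escaping :: "(real \<Rightarrow> real) \<Rightarrow> bool" where
  "escaping r \<longleftrightarrow> \<not> bdd_above (r ` {0..})"

end

theory Submission
  imports Defs
begin

lemma within_to_at:
  assumes "(f has_real_derivative D) (at t within {0..})" "t > 0"
  shows "(f has_real_derivative D) (at t)"
proof -
  have 1: "(f has_real_derivative D) (at t within {0<..})"
    using assms(1) by (rule has_field_derivative_subset) auto
  have "at t within {0<..} = at t" using assms(2) by (intro at_within_open) auto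
  with 1 show ?thesis by simp
qed

lemma smooth_facts:
  assumes "smooth_fun m"
  shows "(m has_real_derivative deriv m x) (at x)"
    and "(deriv m has_real_derivative deriv (deriv m) x) (at x)"
    and "continuous_on S (deriv (deriv m))"
proof -
  have A: "\<And>n y. ((deriv ^^ n) m) differentiable (at y)"
    using assms unfolding smooth_fun_def by blast
  have d0: "m differentiable (at y)" for y
    using A[of 0 y] by simp
  have d1: "deriv m differentiable (at y)" for y
    using A[of 1 y] by simp
  have d2: "deriv (deriv m) differentiable (at y)" for y
    using A[of 2 y] by (simp add: numeral_2_eq_2)
  show "(m has_real_derivative deriv m x) (at x)"
    using d0 DERIV_deriv_iff_real_differentiable by blast
  show "(deriv m has_real_derivative deriv (deriv m) x) (at x)"
    using d1 DERIV_deriv_iff_real_differentiable by blast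
  show "continuous_on S (deriv (deriv m))"
    apply (rule continuous_at_imp_continuous_on)
    using d2 differentiable_imp_continuous_within by blast
qed

lemma quad_bound:
  assumes "smooth_fun m" "deriv m a = 0"
  shows "\<exists>L\<ge>0. \<forall>x. \<bar>x - a\<bar> \<le> 1 \<longrightarrow> \<bar>m x - m a\<bar> \<le> L * (x - a)\<^sup>2"
proof -
  define S where "S = {a-1..a+1}"
  have "compact (deriv (deriv m) ` S)"
    unfolding S_def by (intro compact_continuous_image smooth_facts(3)[OF assms(1)]) auto
  then obtain L0 where L0: "\<forall>y\<in>deriv (deriv m) ` S. norm y \<le> L0"
    using compact_imp_bounded bounded_iff by metis
  define L where "L = max L0 0"
  have L: "\<bar>deriv (deriv m) z\<bar> \<le> L" if "z \<in> S" for z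
    using L0 that unfolding L_def by fastforce
  have L1: "\<bar>deriv m x\<bar> \<le> L * \<bar>x - a\<bar>" if "x \<in> S" for x
  proof -
    have "norm (deriv m x - deriv m a) \<le> L * norm (x - a)"
      apply (rule field_differentiable_bound[where S=S and f'="deriv (deriv m)"])
      using smooth_facts(2)[OF assms(1)] L that
      by (auto simp: S_def has_field_derivative_at_within)
    then show ?thesis using assms(2) by simp
  qed
  show ?thesis
  proof (intro exI[of _ L] conjI allI impI)
    show "L \<ge> 0" unfolding L_def by simp
    fix x assume x: "\<bar>x - a\<bar> \<le> 1"
    define T where "T = {min a x..max a x}"
    have TS: "T \<subseteq> S" using x unfolding T_def S_def by auto
    have "norm (m x - m a) \<le> (L * \<bar>x - a\<bar>) * norm (x - a)"
    proof (rule field_differentiable_bound[where S=T and f'="deriv m"])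
      show "convex T" unfolding T_def by simp
      show "(m has_real_derivative deriv m z) (at z within T)" for z
        using smooth_facts(1)[OF assms(1)] by (auto simp: has_field_derivative_at_within)
      fix z assume z: "z \<in> T"
      have "\<bar>deriv m z\<bar> \<le> L * \<bar>z - a\<bar>" using L1 TS z by auto
      also have "\<dots> \<le> L * \<bar>x - a\<bar>"
        using z unfolding T_def L_def by (intro mult_left_mono) auto
      finally show "norm (deriv m z) \<le> L * \<bar>x - a\<bar>" by simp
    qed (auto simp: T_def)
    then show "\<bar>m x - m a\<bar> \<le> L * (x - a)\<^sup>2" by (simp add: power2_eq_square mult.assoc)
  qed
qed


lemma dsq: assumes "(f has_real_derivative D) (at t within S)"
  shows "((\<lambda>x. (f x)\<^sup>2) has_real_derivative 2 * f t * D) (at t within S)"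
proof -
  have "((\<lambda>x. f x * f x) has_real_derivative f t * D + D * f t) (at t within S)"
    by (rule DERIV_mult'[OF assms assms])
  then show ?thesis by (simp add: power2_eq_square algebra_simps)
qed
theorem lemma3p2:
  fixes m r \<theta> \<rho> \<omega> :: "real \<Rightarrow> real" and rq thq :: real
  assumes "rot_sym_profile m"
    and "rq > 0"
    and "is_gamma_q m rq thq r \<theta> \<rho> \<omega>"
    and "escaping r"
  shows "(\<forall>s>rq. m s > m rq) \<and> deriv m rq > 0"
proof -
  have sm: "smooth_fun m" and mpos: "\<And>x. x > 0 \<Longrightarrow> m x > 0"
    using assms(1) unfolding rot_sym_profile_def by auto
  have geo: "polar_geodesic m r \<theta> \<rho> \<omega>" and r0: "r 0 = rq" and rho0: "\<rho> 0 = 0"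
    and om0: "\<omega> 0 = 1 / m rq"
    using assms(3) unfolding is_gamma_q_def by auto
  define c where "c = m rq"
  have cpos: "c > 0" using mpos assms(2) unfolding c_def by auto
  have rpos: "\<And>t. t \<ge> 0 \<Longrightarrow> r t > 0"
    and dr: "\<And>t. t \<ge> 0 \<Longrightarrow> (r has_real_derivative \<rho> t) (at t within {0..})"
    and drho: "\<And>t. t \<ge> 0 \<Longrightarrow> (\<rho> has_real_derivative (m (r t) * deriv m (r t) * (\<omega> t)\<^sup>2)) (at t within {0..})"
    and dom: "\<And>t. t \<ge> 0 \<Longrightarrow> (\<omega> has_real_derivative (- 2 * deriv m (r t) / m (r t) * \<rho> t * \<omega> t)) (at t within {0..})"
    using geo unfolding polar_geodesic_def by auto
  have mrpos: "\<And>t. t \<ge> 0 \<Longrightarrow> m (r t) > 0" using rpos mpos by auto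
  have dmr: "((\<lambda>t. m (r t)) has_real_derivative deriv m (r t) * \<rho> t) (at t within {0..})"
    if "t \<ge> 0" for t
    by (rule DERIV_chain2[OF smooth_facts(1)[OF sm] dr[OF that]])
  have rcont: "continuous_on {0..} r"
    by (rule DERIV_continuous_on[where D=\<rho>]) (use dr in auto)
  \<comment> \<open>Clairaut\<close>
  have "\<exists>k. \<forall>t\<in>{0..}. (m (r t))\<^sup>2 * \<omega> t = k"
  proof (rule has_field_derivative_zero_constant)
    fix t :: real assume t: "t \<in> {0..}"
    then have t0: "t \<ge> 0" by simp
    show "((\<lambda>t. (m (r t))\<^sup>2 * \<omega> t) has_real_derivative 0) (at t within {0..})"
      apply (rule DERIV_cong[OF DERIV_mult'[OF dsq[OF dmr[OF t0]] dom[OF t0]]])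
      using mrpos[OF t0] by (simp add: field_simps power2_eq_square)
  qed simp
  then obtain k where k: "\<And>t. t \<ge> 0 \<Longrightarrow> (m (r t))\<^sup>2 * \<omega> t = k" by auto
  have "k = c" using k[of 0] r0 om0 cpos unfolding c_def by (simp add: power2_eq_square)
  have om: "\<omega> t = c / (m (r t))\<^sup>2" if t0: "t \<ge> 0" for t
  proof -
    have "(m (r t))\<^sup>2 * \<omega> t = c" using k[OF t0] \<open>k = c\<close> by simp
    moreover have "(m (r t))\<^sup>2 \<noteq> 0" using mrpos[OF t0] by simp
    ultimately show ?thesis by (simp add: eq_divide_eq mult.commute)
  qed
  have "\<exists>e. \<forall>t\<in>{0..}. (\<rho> t)\<^sup>2 + (m (r t))\<^sup>2 * (\<omega> t)\<^sup>2 = e"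
  proof (rule has_field_derivative_zero_constant)
    fix t :: real assume t: "t \<in> {0..}"
    then have t0: "t \<ge> 0" by simp
    show "((\<lambda>t. (\<rho> t)\<^sup>2 + (m (r t))\<^sup>2 * (\<omega> t)\<^sup>2) has_real_derivative 0) (at t within {0..})"
      apply (rule DERIV_cong[OF DERIV_add[OF dsq[OF drho[OF t0]] DERIV_mult'[OF dsq[OF dmr[OF t0]] dsq[OF dom[OF t0]]]]])
      using mrpos[OF t0] by (simp add: field_simps power2_eq_square)
  qed simp
  then obtain e where e: "\<And>t. t \<ge> 0 \<Longrightarrow> (\<rho> t)\<^sup>2 + (m (r t))\<^sup>2 * (\<omega> t)\<^sup>2 = e" by auto
  have "e = 1" using e[of 0] r0 om0 rho0 cpos unfolding c_def by (simp add: power2_eq_square)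
  have rho2: "\<And>t. t \<ge> 0 \<Longrightarrow> (\<rho> t)\<^sup>2 = 1 - c\<^sup>2 / (m (r t))\<^sup>2"
  proof -
    fix t :: real assume t0: "t \<ge> 0"
    have "(m (r t))\<^sup>2 * (\<omega> t)\<^sup>2 = c\<^sup>2 / (m (r t))\<^sup>2"
      using om[OF t0] mrpos[OF t0] by (simp add: field_simps power2_eq_square)
    then show "(\<rho> t)\<^sup>2 = 1 - c\<^sup>2 / (m (r t))\<^sup>2" using e[OF t0] \<open>e = 1\<close> by simp
  qed
  have mge: "\<And>t. t \<ge> 0 \<Longrightarrow> m (r t) \<ge> c"
  proof -
    fix t :: real assume t0: "t \<ge> 0"
    have "c\<^sup>2 / (m (r t))\<^sup>2 \<le> 1" using rho2[OF t0] by (metis diff_ge_0_iff_ge zero_le_power2)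
    then have "c\<^sup>2 \<le> (m (r t))\<^sup>2" using mrpos[OF t0] by (simp add: divide_le_eq)
    then show "m (r t) \<ge> c" using mrpos[OF t0] cpos by (simp add: power2_le_iff_abs_le)
  qed
  have rho_le1: "(\<rho> t)\<^sup>2 \<le> 1" if t0: "t \<ge> 0" for t
    using rho2[OF t0] by (simp add: zero_le_divide_iff)
  have stay: "\<forall>t\<ge>t0. r t = a"
    if a0: "a > 0" and ma: "m a = c" and dma: "deriv m a = 0" and t00: "t0 \<ge> 0" and rt0: "r t0 = a"
    for a t0
  proof -
    obtain L where L0: "L \<ge> 0" and L: "\<And>x. \<bar>x - a\<bar> \<le> 1 \<Longrightarrow> \<bar>m x - m a\<bar> \<le> L * (x - a)\<^sup>2"
      using quad_bound[OF sm dma] by auto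
    define C where "C = max 1 (2 * L / c)"
    have C1: "C \<ge> 1" unfolding C_def by simp
    have bnd: "(\<rho> t)\<^sup>2 \<le> C * (r t - a)\<^sup>2" if t0: "t \<ge> 0" for t
    proof (cases "\<bar>r t - a\<bar> \<le> 1")
      case True
      define M where "M = m (r t)"
      have Mc: "M \<ge> c" using mge[OF t0] unfolding M_def .
      have "(\<rho> t)\<^sup>2 = (M - c) * (M + c) / M\<^sup>2"
        using rho2[OF t0] cpos Mc unfolding M_def[symmetric] by (simp add: field_simps power2_eq_square)
      also have "\<dots> \<le> (M - c) * (2 * M) / M\<^sup>2"
        using Mc cpos by (intro divide_right_mono mult_left_mono) auto
      also have "\<dots> = 2 * (M - c) / M"
        using Mc cpos by (simp add: power2_eq_square field_simps)
      also have "\<dots> \<le> 2 * (M - c) / c"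
        using Mc cpos by (intro divide_left_mono) auto
      also have "\<dots> \<le> 2 * (L * (r t - a)\<^sup>2) / c"
        using L[OF True] ma Mc cpos unfolding M_def by (intro divide_right_mono) auto
      also have "\<dots> = (2 * L / c) * (r t - a)\<^sup>2" by simp
      also have "\<dots> \<le> C * (r t - a)\<^sup>2"
        unfolding C_def by (intro mult_right_mono) auto
      finally show ?thesis .
    next
      case False
      then have "1 \<le> (r t - a)\<^sup>2"
        by (metis abs_le_square_iff abs_one linorder_le_cases one_power2)
      then have "1 \<le> C * (r t - a)\<^sup>2" using C1
        by (metis mult_mono' mult_1 zero_le_one)
      then show ?thesis using rho_le1[OF t0] by linarith
    qed
    define h where "h t = (r t - a)\<^sup>2 * exp (- ((1 + C) * t))" for t
    have hcont: "continuous_on {0..} h"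
      unfolding h_def by (intro continuous_intros rcont)
    have hnonneg: "h t \<ge> 0" for t unfolding h_def by simp
    have hdec: "h t \<le> h t0" if t: "t \<ge> t0" for t
    proof (rule DERIV_nonpos_imp_decreasing_open[OF t])
      show "continuous_on {t0..t} h" using t00 by (intro continuous_on_subset[OF hcont]) auto
      fix x assume x: "t0 < x" "x < t"
      then have x0: "x > 0" "x \<ge> 0" using t00 by auto
      have dr': "(r has_real_derivative \<rho> x) (at x)" by (rule within_to_at[OF dr[OF x0(2)] x0(1)])
      have dE: "((\<lambda>t. exp (- ((1 + C) * t))) has_real_derivative exp (- ((1 + C) * x)) * (- ((1 + C) * 1))) (at x)"
        by (intro DERIV_chain2[OF DERIV_exp] DERIV_minus DERIV_cmult DERIV_ident)
      have dd: "((\<lambda>t. r t - a) has_real_derivative \<rho> x - 0) (at x)"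
        by (intro DERIV_diff dr' DERIV_const)
      have "(h has_real_derivative (r x - a)\<^sup>2 * (exp (- ((1 + C) * x)) * (- ((1 + C) * 1))) + 2 * (r x - a) * (\<rho> x - 0) * exp (- ((1 + C) * x))) (at x)"
        unfolding h_def[abs_def] by (rule DERIV_mult'[OF dsq[OF dd] dE])
      moreover have "(r x - a)\<^sup>2 * (exp (- ((1 + C) * x)) * (- ((1 + C) * 1))) + 2 * (r x - a) * (\<rho> x - 0) * exp (- ((1 + C) * x)) \<le> 0"
      proof -
        have "2 * (r x - a) * \<rho> x \<le> (r x - a)\<^sup>2 + (\<rho> x)\<^sup>2"
          using zero_le_power2[of "r x - a - \<rho> x"]
          unfolding power2_eq_square by (simp add: algebra_simps)
        also have "\<dots> \<le> (1 + C) * (r x - a)\<^sup>2" using bnd[OF x0(2)] by (simp add: algebra_simps)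
        finally have "2 * (r x - a) * \<rho> x - (1 + C) * (r x - a)\<^sup>2 \<le> 0" by simp
        then have "exp (- ((1 + C) * x)) * (2 * (r x - a) * \<rho> x - (1 + C) * (r x - a)\<^sup>2) \<le> 0"
          by (simp add: mult_nonneg_nonpos)
        then show ?thesis by (simp add: algebra_simps)
      qed
      ultimately show "\<exists>y. (h has_real_derivative y) (at x) \<and> y \<le> 0" by blast
    qed
    show ?thesis
    proof (intro allI impI)
      fix t assume t: "t \<ge> t0"
      have "h t0 = 0" unfolding h_def using rt0 by simp
      then have "h t = 0" using hdec[OF t] hnonneg[of t] by simp
      then show "r t = a" unfolding h_def by simp
    qed
  qed
  have nbdd: "\<not> (\<forall>t\<ge>t0. r t = a)" if t00: "t0 \<ge> 0" for t0 a
  proof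
    assume H: "\<forall>t\<ge>t0. r t = a"
    have "compact (r ` {0..t0})"
      by (intro compact_continuous_image continuous_on_subset[OF rcont]) auto
    then have "bdd_above (r ` {0..t0})" by (intro bounded_imp_bdd_above compact_imp_bounded)
    then obtain B where B: "\<And>x. x \<in> r ` {0..t0} \<Longrightarrow> x \<le> B"
      unfolding bdd_above_def by auto
    have "bdd_above (r ` {0..})"
    proof (rule bdd_aboveI[of _ "max B a"])
      fix x assume "x \<in> r ` {0..}"
      then obtain t where t: "t \<ge> 0" "x = r t" by auto
      show "x \<le> max B a"
      proof (cases "t \<le> t0")
        case True then show ?thesis using B[of x] t by auto
      next
        case False then show ?thesis using H t by auto
      qed
    qed
    then show False using assms(4) unfolding escaping_def by simp
  qed
  have hit: "\<exists>u\<ge>0. r u = s" if s: "s \<ge> rq" for s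
  proof -
    obtain t where t: "t \<ge> 0" "r t > s"
      using assms(4) unfolding escaping_def bdd_above_def by (metis atLeast_iff imageE not_le)
    have "\<exists>u. 0 \<le> u \<and> u \<le> t \<and> r u = s"
      by (rule IVT') (use r0 s t in \<open>auto intro: continuous_on_subset[OF rcont]\<close>)
    then show ?thesis by auto
  qed
  have mgeq: "m s \<ge> c" if s: "s \<ge> rq" for s
    using hit[OF s] mge by auto
  have part1: "\<forall>s>rq. m s > m rq"
  proof (intro allI impI)
    fix s0 assume s0: "s0 > rq"
    show "m s0 > m rq"
    proof (rule ccontr)
      assume "\<not> m s0 > m rq"
      then have ms0: "m s0 = c" using mgeq[of s0] s0 unfolding c_def by auto
      have "deriv m s0 = 0"
      proof (rule DERIV_local_min[OF smooth_facts(1)[OF sm]])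
        show "0 < s0 - rq" using s0 by simp
        show "\<forall>y. \<bar>s0 - y\<bar> < s0 - rq \<longrightarrow> m s0 \<le> m y"
          using mgeq ms0 by auto
      qed
      obtain u where u: "u \<ge> 0" "r u = s0" using hit[of s0] s0 by auto
      show False using stay[of s0 u] nbdd[of u s0] u ms0 \<open>deriv m s0 = 0\<close> s0 assms(2) by auto
    qed
  qed
  have part2: "deriv m rq > 0"
  proof (rule ccontr)
    assume "\<not> deriv m rq > 0"
    then consider "deriv m rq < 0" | "deriv m rq = 0" by linarith
    then show False
    proof cases
      case 1
      then obtain d where d: "d > 0" "\<And>h. h > 0 \<Longrightarrow> h < d \<Longrightarrow> m rq > m (rq + h)"
        using DERIV_neg_dec_right[OF smooth_facts(1)[OF sm]] by blast
      have "m rq > m (rq + d/2)" using d by auto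
      moreover have "m (rq + d/2) > m rq" using part1 d by auto
      ultimately show False by simp
    next
      case 2
      show False using stay[of rq 0] nbdd[of 0 rq] 2 r0 assms(2) unfolding c_def by auto
    qed
  qed
  show ?thesis using part1 part2 by simp
qed

end
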